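(* Fix $k\ge2$ and let $\delta:[n]\times[k]\to[n]$ be a uniformly random $k$-map. The probability that $\delta$ has a sink state or a sink pair is $O(n^{-k+1})$ as $n\to\infty$ (with implied constant at most $1+\frac{(k+1)^{2k}}{2(k-1)!}$).
   Context: $\delta_\alpha(i):=\delta(i,\alpha)$. A state $i$ is a sink state if $\delta_\alpha(i)=i$ for all $\alpha\in[k]$. Two distinct states $\{i,j\}$ form a sink pair if the set $N_{ij}=\{i,j,\delta_1(i),\delta_1(j),\dots,\delta_k(i),\delta_k(j)\}$ has cardinality at most $k+1$. *)

theory Defs
  imports "HOL-Probability.Probability"
begin

text \<open>States are [n] = {0..<n}, letters are [k] = {0..<k} (0-based indexing).
  A k-map is a function delta : [n] x [k] -> [n], represented as an extensional
  function on the product set.\<close>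

definition kmaps :: "nat \<Rightarrow> nat \<Rightarrow> (nat \<times> nat \<Rightarrow> nat) set" where
  "kmaps n k = ({0..<n} \<times> {0..<k}) \<rightarrow>\<^sub>E {0..<n}"

definition sink_state :: "nat \<Rightarrow> (nat \<times> nat \<Rightarrow> nat) \<Rightarrow> nat \<Rightarrow> bool" where
  "sink_state k \<delta> i \<longleftrightarrow> (\<forall>\<alpha>\<in>{0..<k}. \<delta> (i, \<alpha>) = i)"

definition sink_pair :: "nat \<Rightarrow> (nat \<times> nat \<Rightarrow> nat) \<Rightarrow> nat \<Rightarrow> nat \<Rightarrow> bool" where
  "sink_pair k \<delta> i j \<longleftrightarrow> i \<noteq> j \<and>
     card ({i, j} \<union> (\<lambda>\<alpha>. \<delta> (i, \<alpha>)) ` {0..<k} \<union> (\<lambda>\<alpha>. \<delta> (j, \<alpha>)) ` {0..<k}) \<le> k + 1"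

definition has_sink_state_or_pair :: "nat \<Rightarrow> nat \<Rightarrow> (nat \<times> nat \<Rightarrow> nat) \<Rightarrow> bool" where
  "has_sink_state_or_pair n k \<delta> \<longleftrightarrow>
     (\<exists>i\<in>{0..<n}. sink_state k \<delta> i) \<or>
     (\<exists>i\<in>{0..<n}. \<exists>j\<in>{0..<n}. sink_pair k \<delta> i j)"

end

theory Submission
  imports Defs
begin

lemma card_PiE_if:
  assumes "finite D" "R \<subseteq> D"
  shows "card (PiE D (\<lambda>x. if x \<in> R then C else B)) = card C ^ card R * card B ^ (card D - card R)"
proof -
  have "card (PiE D (\<lambda>x. if x \<in> R then C else B)) = (\<Prod>x\<in>D. if x \<in> R then card C else card B)"
    using assms by (simp add: card_PiE if_distrib)
  also have "\<dots> = card C ^ card (D \<inter> {x. x \<in> R}) * card B ^ card (D \<inter> - {x. x \<in> R})"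
    using assms by (simp add: prod.If_cases)
  also have "D \<inter> {x. x \<in> R} = R" using assms by auto
  also have "D \<inter> - {x. x \<in> R} = D - R" by auto
  also have "card (D - R) = card D - card R"
    using assms by (simp add: card_Diff_subset finite_subset)
  finally show ?thesis .
qed

lemma extend_set:
  assumes "finite U" "X \<subseteq> U" "card X \<le> m" "m \<le> card U"
  shows "\<exists>S. X \<subseteq> S \<and> S \<subseteq> U \<and> card S = m"
proof -
  have fX: "finite X" using assms finite_subset by blast
  have "m - card X \<le> card (U - X)" using assms by (simp add: card_Diff_subset fX)
  then obtain T where T: "T \<subseteq> U - X" "card T = m - card X" "finite T"
    by (metis obtain_subset_with_card_n)
  have "card (X \<union> T) = card X + card T"
    using T fX by (subst card_Un_disjoint) auto
  then show ?thesis using T assms by (intro exI[of _ "X \<union> T"]) auto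
qed

lemma count_bound:
  fixes n k :: nat
  assumes k: "k \<ge> 2" and n: "n \<ge> k + 1"
  shows "card {\<delta> \<in> kmaps n k. has_sink_state_or_pair n k \<delta>}
    \<le> n * n ^ (n*k - k) + (n choose (k+1)) * ((k+1) choose 2) * ((k+1) ^ (2*k) * n ^ (n*k - 2*k))"
proof -
  define D where "D = {0..<n} \<times> {0..<k}"
  have fD: "finite D" and cD: "card D = n * k" by (auto simp: D_def)
  define A where "A i = PiE D (\<lambda>x. if x \<in> {i} \<times> {0..<k} then {i} else {0..<n})" for i
  define SS where "SS = {S. S \<subseteq> {0..<n} \<and> card S = k + 1}"
  define PP where "PP S = {P. P \<subseteq> S \<and> card P = 2}" for S :: "nat set"
  define Bs where "Bs S P = PiE D (\<lambda>x. if x \<in> P \<times> {0..<k} then S \<inter> {0..<n} else {0..<n})" for S P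
  have fA: "finite (A i)" for i by (simp add: A_def fD finite_PiE)
  have fB: "finite (Bs S P)" for S P by (simp add: Bs_def fD finite_PiE)
  have fSS: "finite SS" unfolding SS_def by (rule finite_subset[of _ "Pow {0..<n}"]) auto
  have fPP: "S \<in> SS \<Longrightarrow> finite (PP S)" for S
    unfolding PP_def SS_def by (rule finite_subset[of _ "Pow S"]) (auto intro: finite_subset)
  have cardA: "card (A i) = n ^ (n*k - k)" if "i < n" for i
  proof -
    have "card (A i) = card {i} ^ card ({i} \<times> {0..<k}) * card {0..<n} ^ (card D - card ({i} \<times> {0..<k}))"
      unfolding A_def by (rule card_PiE_if[OF fD]) (use that in \<open>auto simp: D_def\<close>)
    then show ?thesis by (simp add: cD card_cartesian_product)
  qed
  have cardB: "card (Bs S P) = (k+1) ^ (2*k) * n ^ (n*k - 2*k)" if "S \<in> SS" "P \<in> PP S" for S P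
  proof -
    have sub: "P \<times> {0..<k} \<subseteq> D" using that by (auto simp: D_def SS_def PP_def)
    have fP: "finite P" using that by (auto simp: PP_def intro: card_ge_0_finite)
    have cP: "card (P \<times> {0..<k}) = 2 * k" using that fP by (simp add: PP_def card_cartesian_product)
    have "card (Bs S P) = card (S \<inter> {0..<n}) ^ card (P \<times> {0..<k}) * card {0..<n} ^ (card D - card (P \<times> {0..<k}))"
      unfolding Bs_def by (rule card_PiE_if[OF fD sub])
    moreover have "S \<inter> {0..<n} = S" using that by (auto simp: SS_def)
    ultimately show ?thesis using that cP by (simp add: cD SS_def)
  qed
  have sub: "{\<delta> \<in> kmaps n k. has_sink_state_or_pair n k \<delta>}
      \<subseteq> (\<Union>i\<in>{0..<n}. A i) \<union> (\<Union>S\<in>SS. \<Union>P\<in>PP S. Bs S P)"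
  proof
    fix \<delta> assume "\<delta> \<in> {\<delta> \<in> kmaps n k. has_sink_state_or_pair n k \<delta>}"
    then have km: "\<delta> \<in> kmaps n k" and h: "has_sink_state_or_pair n k \<delta>" by auto
    have km': "\<delta> \<in> PiE D (\<lambda>_. {0..<n})" using km by (simp add: kmaps_def D_def)
    show "\<delta> \<in> (\<Union>i\<in>{0..<n}. A i) \<union> (\<Union>S\<in>SS. \<Union>P\<in>PP S. Bs S P)"
      using h unfolding has_sink_state_or_pair_def
    proof
      assume "\<exists>i\<in>{0..<n}. sink_state k \<delta> i"
      then obtain i where i: "i < n" "sink_state k \<delta> i" by auto
      have "\<delta> \<in> A i" using km' i unfolding A_def by (auto simp: PiE_iff sink_state_def)
      then show ?thesis using i by auto
    next
      assume "\<exists>i\<in>{0..<n}. \<exists>j\<in>{0..<n}. sink_pair k \<delta> i j"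
      then obtain i j where ij: "i < n" "j < n" "sink_pair k \<delta> i j" by auto
      define X where "X = {i, j} \<union> (\<lambda>\<alpha>. \<delta> (i, \<alpha>)) ` {0..<k} \<union> (\<lambda>\<alpha>. \<delta> (j, \<alpha>)) ` {0..<k}"
      have ne: "i \<noteq> j" and cX: "card X \<le> k + 1" using ij by (auto simp: sink_pair_def X_def)
      have XU: "X \<subseteq> {0..<n}" using km' ij by (auto simp: X_def PiE_iff D_def)
      obtain S where S: "X \<subseteq> S" "S \<subseteq> {0..<n}" "card S = k + 1"
        using extend_set[OF _ XU cX] n by auto
      have SS: "S \<in> SS" using S by (simp add: SS_def)
      have PP: "{i,j} \<in> PP S" using S ne by (auto simp: PP_def X_def)
      have "\<delta> \<in> Bs S {i,j}"
        unfolding Bs_def using km' S by (auto simp: PiE_iff X_def)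
      then show ?thesis using SS PP by blast
    qed
  qed
  have "card {\<delta> \<in> kmaps n k. has_sink_state_or_pair n k \<delta>}
      \<le> card ((\<Union>i\<in>{0..<n}. A i) \<union> (\<Union>S\<in>SS. \<Union>P\<in>PP S. Bs S P))"
    by (rule card_mono[OF _ sub]) (use fA fB fSS fPP in auto)
  also have "\<dots> \<le> card (\<Union>i\<in>{0..<n}. A i) + card (\<Union>S\<in>SS. \<Union>P\<in>PP S. Bs S P)"
    by (rule card_Un_le)
  also have "card (\<Union>i\<in>{0..<n}. A i) \<le> (\<Sum>i\<in>{0..<n}. card (A i))"
    by (rule card_UN_le) simp
  also have "\<dots> = n * n ^ (n*k - k)" using cardA by simp
  also have "card (\<Union>S\<in>SS. \<Union>P\<in>PP S. Bs S P) \<le> (\<Sum>S\<in>SS. card (\<Union>P\<in>PP S. Bs S P))"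
    by (rule card_UN_le[OF fSS])
  also have "\<dots> \<le> (\<Sum>S\<in>SS. \<Sum>P\<in>PP S. card (Bs S P))"
    by (rule sum_mono) (rule card_UN_le[OF fPP])
  also have "\<dots> = (\<Sum>S\<in>SS. \<Sum>P\<in>PP S. (k+1) ^ (2*k) * n ^ (n*k - 2*k))"
    using cardB by (intro sum.cong refl) auto
  also have "\<dots> = (\<Sum>S\<in>SS. ((k+1) choose 2) * ((k+1) ^ (2*k) * n ^ (n*k - 2*k)))"
  proof (intro sum.cong refl)
    fix S assume "S \<in> SS"
    then have "finite S" "card S = k + 1" by (auto simp: SS_def intro: finite_subset)
    then have "card (PP S) = (k+1) choose 2" unfolding PP_def by (simp add: n_subsets)
    then show "(\<Sum>P\<in>PP S. (k+1) ^ (2*k) * n ^ (n*k - 2*k)) = ((k+1) choose 2) * ((k+1) ^ (2*k) * n ^ (n*k - 2*k))"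
      by simp
  qed
  also have "\<dots> = (n choose (k+1)) * ((k+1) choose 2) * ((k+1) ^ (2*k) * n ^ (n*k - 2*k))"
    by (simp add: SS_def n_subsets)
  finally show ?thesis by simp
qed

lemma fact_choose2:
  fixes k :: nat assumes "k \<ge> 2"
  shows "((k+1) choose 2) * 2 * fact (k-1) = (fact (k+1) :: nat)"
proof -
  have e: "even ((k+1) * k)" by simp
  have "((k+1) choose 2) * 2 = (k+1) * k" using e by (simp add: choose_two)
  moreover have "fact (k+1) = (k+1) * k * (fact (k-1) :: nat)"
  proof -
    have a: "fact (k+1) = (k+1) * (fact k :: nat)" by simp
    have b: "fact k = k * (fact (k-1) :: nat)" using assms fact_reduce[where 'a=nat and n=k] by simp
    show ?thesis unfolding a b by (simp add: mult.assoc distrib_right)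
  qed
  ultimately show ?thesis by simp
qed

lemma real_bound:
  fixes k n :: nat
  assumes k: "k \<ge> 2" and n: "n \<ge> k + 1"
  shows "real (n * n ^ (n*k - k) + (n choose (k+1)) * ((k+1) choose 2) * ((k+1) ^ (2*k) * n ^ (n*k - 2*k)))
     / real n ^ (n*k)
     \<le> (1 + real ((k + 1) ^ (2 * k)) / (2 * fact (k - 1))) * real n powr (- real k + 1)"
proof -
  define x where "x = real n"
  define Cb where "Cb = real ((n choose (k+1)) * ((k+1) choose 2))"
  define M where "M = real ((k + 1) ^ (2 * k))"
  define F :: real where "F = fact (k - 1)"
  have x0: "x > 0" using n by (simp add: x_def)
  have F0: "F > 0" by (simp add: F_def)
  have M0: "M \<ge> 0" by (simp add: M_def)
  have key: "Cb * (2 * F) \<le> x ^ (k+1)"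
  proof -
    have "(n choose (k+1)) * ((k+1) choose 2) * 2 * fact (k-1) = (n choose (k+1)) * fact (k+1)"
      using fact_choose2[OF k] by (metis mult.assoc)
    also have "\<dots> \<le> n ^ (k+1)" by (rule binomial_fact_pow)
    finally have "real ((n choose (k+1)) * ((k+1) choose 2) * 2 * fact (k-1)) \<le> real (n ^ (k+1))"
      by linarith
    then show ?thesis by (simp add: Cb_def F_def x_def mult.assoc)
  qed
  have p1: "x ^ (n*k) = x ^ (n*k - k) * x ^ k"
    using n by (simp add: power_add[symmetric])
  have p2: "x ^ (n*k) = x ^ (n*k - 2*k) * x ^ (2*k)"
    using n by (subst power_add[symmetric]) (simp add: le_diff_conv2)
  have lhs: "real (n * n ^ (n*k - k) + (n choose (k+1)) * ((k+1) choose 2) * ((k+1) ^ (2*k) * n ^ (n*k - 2*k)))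
     / real n ^ (n*k) = x / x^k + Cb * M / x ^ (2*k)"
  proof -
    have "real (n * n ^ (n*k - k) + (n choose (k+1)) * ((k+1) choose 2) * ((k+1) ^ (2*k) * n ^ (n*k - 2*k)))
        = x * x ^ (n*k - k) + Cb * M * x ^ (n*k - 2*k)"
      by (simp add: x_def Cb_def M_def)
    also have "\<dots> / x ^ (n*k) = x * x ^ (n*k - k) / x ^ (n*k) + Cb * M * x ^ (n*k - 2*k) / x ^ (n*k)"
      by (simp add: add_divide_distrib)
    also have "x * x ^ (n*k - k) / x ^ (n*k) = x / x^k" using x0 by (subst p1) simp
    also have "Cb * M * x ^ (n*k - 2*k) / x ^ (n*k) = Cb * M / x ^ (2*k)" using x0 by (subst p2) simp
    finally show ?thesis by (simp add: x_def)
  qed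
  have t2: "Cb * M / x ^ (2*k) \<le> M / (2*F) * (x / x^k)"
  proof -
    have "Cb * M / x ^ (2*k) = (Cb * (2*F)) * (M / (2*F)) / x ^ (2*k)" using F0 by simp
    also have "\<dots> \<le> x ^ (k+1) * (M / (2*F)) / x ^ (2*k)"
      by (rule divide_right_mono[OF mult_right_mono[OF key]]) (use F0 M0 x0 in auto)
    also have "\<dots> = M / (2*F) * (x / x^k)"
    proof -
      have e1: "x ^ (2*k) = x^k * x^k" by (simp add: mult_2 power_add)
      have e2: "x^(k+1) = x * x^k" by simp
      have nz: "x^k \<noteq> 0" using x0 by simp
      show ?thesis unfolding e1 e2 using nz F0 by (simp add: field_simps)
    qed
    finally show ?thesis .
  qed
  have pw: "real n powr (- real k + 1) = x / x ^ k"
  proof -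
    have "real n powr (- real k + 1) = real n powr (1 - real k)" by simp
    also have "\<dots> = real n powr 1 / real n powr real k" by (rule powr_diff)
    also have "\<dots> = x / x ^ k" using x0 by (simp add: x_def powr_realpow)
    finally show ?thesis .
  qed
  have fin: "x / x^k + Cb * M / x ^ (2*k) \<le> (1 + M / (2*F)) * (x / x^k)"
    using t2 by (simp only: distrib_right mult_1_left)
  then show ?thesis unfolding lhs pw M_def F_def .
qed

theorem mainTheorem3:
  fixes k :: nat
  assumes "k \<ge> 2"
  shows "\<exists>N. \<forall>n\<ge>N.
    measure_pmf.prob (pmf_of_set (kmaps n k)) {\<delta>. has_sink_state_or_pair n k \<delta>}
      \<le> (1 + real ((k + 1) ^ (2 * k)) / (2 * fact (k - 1))) * real n powr (- real k + 1)"
proof (intro exI[of _ "k+1"] allI impI)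
  fix n assume n: "n \<ge> k + 1"
  define K where "K = kmaps n k"
  have fK: "finite K" by (simp add: K_def kmaps_def finite_PiE)
  have neK: "K \<noteq> {}" using n by (simp add: K_def kmaps_def PiE_eq_empty_iff)
  have cK: "card K = n ^ (n*k)" by (simp add: K_def kmaps_def card_PiE)
  have "measure_pmf.prob (pmf_of_set K) {\<delta>. has_sink_state_or_pair n k \<delta>}
      = real (card (K \<inter> {\<delta>. has_sink_state_or_pair n k \<delta>})) / real (card K)"
    by (rule measure_pmf_of_set[OF neK fK])
  also have "K \<inter> {\<delta>. has_sink_state_or_pair n k \<delta>} = {\<delta> \<in> kmaps n k. has_sink_state_or_pair n k \<delta>}"
    by (auto simp: K_def)
  also have "real (card {\<delta> \<in> kmaps n k. has_sink_state_or_pair n k \<delta>}) / real (card K)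
     \<le> real (n * n ^ (n*k - k) + (n choose (k+1)) * ((k+1) choose 2) * ((k+1) ^ (2*k) * n ^ (n*k - 2*k)))
     / real n ^ (n*k)"
    unfolding cK of_nat_power by (intro divide_right_mono of_nat_mono count_bound[OF assms n]) simp
  also have "\<dots> \<le> (1 + real ((k + 1) ^ (2 * k)) / (2 * fact (k - 1))) * real n powr (- real k + 1)"
    by (rule real_bound[OF assms n])
  finally show "measure_pmf.prob (pmf_of_set (kmaps n k)) {\<delta>. has_sink_state_or_pair n k \<delta>}
      \<le> (1 + real ((k + 1) ^ (2 * k)) / (2 * fact (k - 1))) * real n powr (- real k + 1)"
    by (simp add: K_def)
qed

end
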